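(* Let $\Gamma\subset PGL_{2n+2}(\mathbb{C})$ be a group of type $\mathcal{L}$, and suppose the homogeneous coordinates $[z':z'']$ on $\mathbb{P}^{2n+1}$ are such that there is $R>0$ with $V_R=\{[z':z'']: \|z'\|>R\|z''\|\}\subset\Omega(\Gamma)$ and $g(V_R)\cap V_R=\emptyset$ for every $g\in\Gamma\setminus\{1\}$. Then there is a constant $R_0>0$ such that for every $g\in\Gamma\setminus\{1\}$, with representative $\begin{pmatrix}A_g&B_g\\C_g&D_g\end{pmatrix}\in SL_{2n+2}(\mathbb{C})$: (i) $\det C_g\neq0$; (ii) $\|A_gC_g^{-1}\|\leq R_0$; (iii) $\|C_g^{-1}D_g\|\leq R_0$.
   Context: $z'=(z^0,\dots,z^n)$, $z''=(z^{n+1},\dots,z^{2n+1})$; $\|\cdot\|$ is the Euclidean norm on vectors and the associated operator norm on matrices; $A_g,B_g,C_g,D_g\in M_{n+1}(\mathbb{C})$. Type $\mathcal{L}$: an $n$-plane is an $n$-dimensional projective linear subspace of $\mathbb{P}^{2n+1}$; with $N=\binom{2n+2}{n+1}-1$, $\mathcal{G}\subset\mathbb{P}^N=\mathbb{P}(\Lambda^{n+1}\mathbb{C}^{2n+2})$ the Plücker-embedded Grassmannian, $\hat\ell$ the Plücker point of $\ell$ and $\hat\sigma$ the induced action of $\sigma$ on $\mathbb{P}^N$; for pairwise distinct $(\tau_\nu)\subset PGL_{m+1}(\mathbb{C})$ with representatives normalized to have largest entry of absolute value $1$ that can be chosen to converge to $T$, the limit image is $\mathbb{P}(\operatorname{Im}T)$;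 a sequence in a discrete $\Gamma$ is normal if it consists of distinct elements and both it and $(\hat\sigma_\nu)$ have such convergent representatives; a limit $n$-plane is an $\ell$ with $\hat\ell$ in the limit image of some $(\hat\sigma_\nu)$ with $(\sigma_\nu)$ normal; $\Omega(\Gamma)$ is the complement of the union of limit $n$-planes; $\Gamma$ is of type $\mathcal{L}$ if it is discrete and $\Omega(\Gamma)$ contains a domain containing an $n$-plane. *)

theory Defs
  imports "HOL-Analysis.Analysis"
    "Jordan_Normal_Form.Determinant"
    "Jordan_Normal_Form.DL_Submatrix"
    "Jordan_Normal_Form.Gauss_Jordan_Elimination"
begin

definition euc_norm :: "complex vec \<Rightarrow> real" where
  "euc_norm v = sqrt (\<Sum>i<dim_vec v. (cmod (v $ i))\<^sup>2)"

definition op_norm :: "complex mat \<Rightarrow> real" where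
  "op_norm M = Sup {euc_norm (M *\<^sub>v v) | v. v \<in> carrier_vec (dim_col M) \<and> euc_norm v \<le> 1}"

definition mat_inv :: "complex mat \<Rightarrow> complex mat" where
  "mat_inv M = the (mat_inverse M)"

text \<open>An element of PGL_m(C) is represented by its class of representatives
 (all nonzero scalar multiples of one invertible m x m matrix).\<close>

definition pgl_cls :: "complex mat \<Rightarrow> complex mat set" where
  "pgl_cls A = {c \<cdot>\<^sub>m A | c. c \<noteq> 0}"

definition PGL :: "nat \<Rightarrow> complex mat set set" where
  "PGL m = {pgl_cls A | A. A \<in> carrier_mat m m \<and> det A \<noteq> 0}"

definition pgl_one :: "nat \<Rightarrow> complex mat set" where
  "pgl_one m = pgl_cls (1\<^sub>m m)"

definition is_subgroup_PGL :: "nat \<Rightarrow> complex mat set set \<Rightarrow> bool" where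
  "is_subgroup_PGL m \<Gamma> \<longleftrightarrow> \<Gamma> \<subseteq> PGL m \<and> pgl_one m \<in> \<Gamma>
     \<and> (\<forall>g\<in>\<Gamma>. \<forall>h\<in>\<Gamma>. \<forall>A\<in>g. \<forall>B\<in>h. pgl_cls (A * B) \<in> \<Gamma>)
     \<and> (\<forall>g\<in>\<Gamma>. \<forall>A\<in>g. \<forall>B. B \<in> carrier_mat m m \<and> A * B = 1\<^sub>m m \<longrightarrow> pgl_cls B \<in> \<Gamma>)"

definition mat_conv :: "nat \<Rightarrow> (nat \<Rightarrow> complex mat) \<Rightarrow> complex mat \<Rightarrow> bool" where
  "mat_conv m As A \<longleftrightarrow> (\<forall>i<m. \<forall>j<m. (\<lambda>k. As k $$ (i,j)) \<longlonglongrightarrow> A $$ (i,j))"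

text \<open>Discreteness in the (quotient) topology of PGL_m(C): no element of \<Gamma> is a limit
 of a sequence of other elements of \<Gamma> (convergence in PGL = convergence of suitable
 representatives).\<close>
definition discrete_PGL :: "nat \<Rightarrow> complex mat set set \<Rightarrow> bool" where
  "discrete_PGL m \<Gamma> \<longleftrightarrow> (\<forall>g\<in>\<Gamma>. \<not> (\<exists>gs As A. (\<forall>k. gs k \<in> \<Gamma> - {g} \<and> As k \<in> gs k)
        \<and> A \<in> g \<and> mat_conv m As A))"

text \<open>Generic square matrices indexed by a finite index set X (used both for
 C^{2n+2}, X = {0..2n+1}, and for the exterior power, X = (n+1)-subsets).\<close>

definition max_abs_one :: "'i set \<Rightarrow> ('i \<Rightarrow> 'i \<Rightarrow> complex) \<Rightarrow> bool" where
  "max_abs_one X T \<longleftrightarrow> Max {cmod (T i j) | i j. i \<in> X \<and> j \<in> X} = 1"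

definition norm_conv :: "'i set \<Rightarrow> (nat \<Rightarrow> ('i \<Rightarrow> 'i \<Rightarrow> complex) set) \<Rightarrow> ('i \<Rightarrow> 'i \<Rightarrow> complex) \<Rightarrow> bool" where
  "norm_conv X cls T \<longleftrightarrow> (\<exists>Ts. (\<forall>k. Ts k \<in> cls k \<and> max_abs_one X (Ts k))
      \<and> (\<forall>i\<in>X. \<forall>j\<in>X. (\<lambda>k. Ts k i j) \<longlonglongrightarrow> T i j))"

definition gimage :: "'i set \<Rightarrow> ('i \<Rightarrow> 'i \<Rightarrow> complex) \<Rightarrow> ('i \<Rightarrow> complex) set" where
  "gimage X T = {(\<lambda>i. if i \<in> X then (\<Sum>j\<in>X. T i j * v j) else 0) | v. True}"

definition subsets_k :: "nat \<Rightarrow> nat \<Rightarrow> nat set set" where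
  "subsets_k m k = {I. I \<subseteq> {..<m} \<and> card I = k}"

definition mfun :: "complex mat \<Rightarrow> nat \<Rightarrow> nat \<Rightarrow> complex" where
  "mfun A i j = A $$ (i,j)"

text \<open>k-th compound matrix (matrix of Lambda^k A w.r.t. the standard basis e_I, I increasing).\<close>
definition compound :: "nat \<Rightarrow> complex mat \<Rightarrow> nat set \<Rightarrow> nat set \<Rightarrow> complex" where
  "compound k A I J = det (submatrix A I J)"

text \<open>Class of the induced transformation \<sigma>^ on P(Lambda^{n+1} C^{2n+2}).\<close>
definition hat_cls :: "nat \<Rightarrow> complex mat set \<Rightarrow> (nat set \<Rightarrow> nat set \<Rightarrow> complex) set" where
  "hat_cls n g = {(\<lambda>I J. c * compound (n+1) A I J) | c A. c \<noteq> 0 \<and> A \<in> g}"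

text \<open>An n-plane of P^{2n+1} is given by a basis matrix M (size (2n+2) x (n+1), full column rank);
 its points are the (representatives of) [M c], c \<noteq> 0.\<close>
definition is_plane_basis :: "nat \<Rightarrow> complex mat \<Rightarrow> bool" where
  "is_plane_basis n M \<longleftrightarrow> M \<in> carrier_mat (2*n+2) (n+1)
      \<and> (\<forall>c\<in>carrier_vec (n+1). M *\<^sub>v c = 0\<^sub>v (2*n+2) \<longrightarrow> c = 0\<^sub>v (n+1))"

definition plane_points :: "nat \<Rightarrow> complex mat \<Rightarrow> complex vec set" where
  "plane_points n M = {M *\<^sub>v c | c. c \<in> carrier_vec (n+1) \<and> c \<noteq> 0\<^sub>v (n+1)}"

definition pluecker :: "nat \<Rightarrow> complex mat \<Rightarrow> nat set \<Rightarrow> complex" where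
  "pluecker n M I = (if I \<in> subsets_k (2*n+2) (n+1) then det (submatrix M I {..<n+1}) else 0)"

definition normal_seq :: "nat \<Rightarrow> complex mat set set \<Rightarrow> (nat \<Rightarrow> complex mat set) \<Rightarrow> bool" where
  "normal_seq n \<Gamma> \<sigma> \<longleftrightarrow> (\<forall>k. \<sigma> k \<in> \<Gamma>) \<and> inj \<sigma>
     \<and> (\<exists>T. norm_conv {..<2*n+2} (\<lambda>k. mfun ` \<sigma> k) T)
     \<and> (\<exists>T. norm_conv (subsets_k (2*n+2) (n+1)) (\<lambda>k. hat_cls n (\<sigma> k)) T)"

definition limit_plane :: "nat \<Rightarrow> complex mat set set \<Rightarrow> complex mat \<Rightarrow> bool" where
  "limit_plane n \<Gamma> M \<longleftrightarrow> is_plane_basis n M \<and>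
     (\<exists>\<sigma> T. normal_seq n \<Gamma> \<sigma> \<and> norm_conv (subsets_k (2*n+2) (n+1)) (\<lambda>k. hat_cls n (\<sigma> k)) T
        \<and> pluecker n M \<in> gimage (subsets_k (2*n+2) (n+1)) T)"

text \<open>Subsets of P^{2n+1} are represented by their cones of nonzero representatives.\<close>
definition Omega :: "nat \<Rightarrow> complex mat set set \<Rightarrow> complex vec set" where
  "Omega n \<Gamma> = (carrier_vec (2*n+2) - {0\<^sub>v (2*n+2)})
      - \<Union> {plane_points n M | M. limit_plane n \<Gamma> M}"

text \<open>Topology on C^m transported from the product topology on nat \<Rightarrow> complex
 (vectors extended by 0), which on this finite-dimensional subspace is the Euclidean one.\<close>
definition vecf :: "complex vec \<Rightarrow> nat \<Rightarrow> complex" where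
  "vecf v = (\<lambda>i. if i < dim_vec v then v $ i else 0)"

definition is_cone :: "nat \<Rightarrow> complex vec set \<Rightarrow> bool" where
  "is_cone m D \<longleftrightarrow> D \<subseteq> carrier_vec m - {0\<^sub>v m} \<and> (\<forall>z\<in>D. \<forall>c. c \<noteq> 0 \<longrightarrow> c \<cdot>\<^sub>v z \<in> D)"

text \<open>A domain of P^{m-1}: open connected subset, represented by its (saturated) cone in C^m - {0}.\<close>
definition proj_domain :: "nat \<Rightarrow> complex vec set \<Rightarrow> bool" where
  "proj_domain m D \<longleftrightarrow> is_cone m D \<and> D \<noteq> {}
     \<and> openin (top_of_set (vecf ` (carrier_vec m - {0\<^sub>v m}))) (vecf ` D)
     \<and> connected (vecf ` D)"

definition type_L :: "nat \<Rightarrow> complex mat set set \<Rightarrow> bool" where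
  "type_L n \<Gamma> \<longleftrightarrow> is_subgroup_PGL (2*n+2) \<Gamma> \<and> discrete_PGL (2*n+2) \<Gamma>
     \<and> (\<exists>D. proj_domain (2*n+2) D \<and> D \<subseteq> Omega n \<Gamma>
          \<and> (\<exists>M. is_plane_basis n M \<and> plane_points n M \<subseteq> D))"

text \<open>z' = first n+1 coordinates, z'' = last n+1 coordinates.\<close>
definition zfst :: "nat \<Rightarrow> complex vec \<Rightarrow> complex vec" where
  "zfst n z = vec (n+1) (\<lambda>i. z $ i)"

definition zsnd :: "nat \<Rightarrow> complex vec \<Rightarrow> complex vec" where
  "zsnd n z = vec (n+1) (\<lambda>i. z $ (i + (n+1)))"

definition V_R :: "nat \<Rightarrow> real \<Rightarrow> complex vec set" where
  "V_R n R = {z \<in> carrier_vec (2*n+2). euc_norm (zfst n z) > R * euc_norm (zsnd n z)}"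

definition pgl_image :: "complex mat set \<Rightarrow> complex vec set \<Rightarrow> complex vec set" where
  "pgl_image g S = {A *\<^sub>v z | A z. A \<in> g \<and> z \<in> S}"

end

theory Submission
  imports Defs
begin

lemma mat_vec_uminus: "(A :: complex mat) \<in> carrier_mat nr nc \<Longrightarrow> v \<in> carrier_vec nc \<Longrightarrow> A *\<^sub>v (- v) = - (A *\<^sub>v v)"
  proof (intro eq_vecI)
  fix i assume A: "A \<in> carrier_mat nr nc" and v: "v \<in> carrier_vec nc" and "i < dim_vec (- (A *\<^sub>v v))"
  then have i: "i < nr" by auto
  have "(\<Sum>ia = 0..<nc. A $$ (i, ia) * (- v) $ ia) = (\<Sum>ia = 0..<nc. - (A $$ (i, ia) * v $ ia))"
    by (rule sum.cong) (use carrier_vecD[OF v] in auto)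
  then show "(A *\<^sub>v (- v)) $ i = (- (A *\<^sub>v v)) $ i"
    using A v i by (simp add: scalar_prod_def sum_negf)
qed (auto)

lemma mat_vec_zero': "(X :: complex mat) \<in> carrier_mat a b \<Longrightarrow> X *\<^sub>v 0\<^sub>v b = 0\<^sub>v a"
  by (intro eq_vecI) (auto simp: scalar_prod_def)

lemma app_zero: "w \<in> carrier_vec m \<Longrightarrow> w @\<^sub>v u = 0\<^sub>v k \<Longrightarrow> w = 0\<^sub>v m"
proof (intro eq_vecI)
  fix i assume w: "w \<in> carrier_vec m" and e: "w @\<^sub>v u = 0\<^sub>v k" and i: "i < dim_vec (0\<^sub>v m)"
  have k: "k = m + dim_vec u" using arg_cong[OF e, of dim_vec] w by simp
  have "(w @\<^sub>v u) $ i = w $ i" using w i by simp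
  then show "w $ i = 0\<^sub>v m $ i" using e i k by simp
qed auto

lemma euc_norm_nonneg: "euc_norm v \<ge> 0"
  unfolding euc_norm_def by (auto intro: sum_nonneg)

lemma euc_norm_le0: assumes "v \<in> carrier_vec k" "euc_norm v \<le> 0" shows "v = 0\<^sub>v k"
proof -
  have "(\<Sum>i<dim_vec v. (cmod (v $ i))\<^sup>2) = 0"
    using assms(2) euc_norm_nonneg[of v] unfolding euc_norm_def
    by (metis (no_types, lifting) order_antisym_conv real_sqrt_eq_zero_cancel_iff sum_nonneg zero_le_power2)
  then have "\<forall>i\<in>{..<dim_vec v}. (cmod (v $ i))\<^sup>2 = 0"
    by (subst (asm) sum_nonneg_eq_0_iff) auto
  then show ?thesis using assms(1) by (intro eq_vecI) auto
qed

lemma euc_norm_0: "euc_norm (0\<^sub>v k) = 0"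
  unfolding euc_norm_def by simp

lemma euc_norm_uminus: "euc_norm (- v) = euc_norm v"
  unfolding euc_norm_def by simp

lemma zfst_app: "w \<in> carrier_vec (n+1) \<Longrightarrow> zfst n (w @\<^sub>v u) = w"
  unfolding zfst_def by (intro eq_vecI) auto

lemma zsnd_app: "w \<in> carrier_vec (n+1) \<Longrightarrow> u \<in> carrier_vec (n+1) \<Longrightarrow> zsnd n (w @\<^sub>v u) = u"
  unfolding zsnd_def by (intro eq_vecI) auto

lemma op_norm_le:
  assumes "\<And>v. v \<in> carrier_vec (dim_col X) \<Longrightarrow> euc_norm (X *\<^sub>v v) \<le> R * euc_norm v" "R > 0"
  shows "op_norm X \<le> R"
  unfolding op_norm_def
proof (rule cSup_least)
  show "{euc_norm (X *\<^sub>v v) |v. v \<in> carrier_vec (dim_col X) \<and> euc_norm v \<le> 1} \<noteq> {}"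
    using zero_carrier_vec[of "dim_col X"] euc_norm_0[of "dim_col X"] by fastforce
next
  fix x assume "x \<in> {euc_norm (X *\<^sub>v v) |v. v \<in> carrier_vec (dim_col X) \<and> euc_norm v \<le> 1}"
  then obtain v where v: "v \<in> carrier_vec (dim_col X)" "euc_norm v \<le> 1" "x = euc_norm (X *\<^sub>v v)" by auto
  have "x \<le> R * euc_norm v" using assms(1) v by auto
  also have "\<dots> \<le> R * 1" using v(2) assms(2) by (intro mult_left_mono) auto
  finally show "x \<le> R" by simp
qed

lemma key:
  fixes M :: "complex mat"
  assumes M: "M \<in> carrier_mat (2*n+2) (2*n+2)" and dM: "det M \<noteq> 0" and R: "R > 0"
    and hyp: "\<And>z. z \<in> V_R n R \<Longrightarrow> M *\<^sub>v z \<notin> V_R n R"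
    and sb: "split_block M (n+1) (n+1) = (A, B, C, D)"
  shows "det C \<noteq> 0 \<and> op_norm (A * mat_inv C) \<le> R \<and> op_norm (mat_inv C * D) \<le> R"
proof -
  let ?m = "n+1"
  have dims: "dim_row M = ?m + ?m" "dim_col M = ?m + ?m" using M by auto
  note blk = split_block[OF sb dims]
  have A: "A \<in> carrier_mat ?m ?m" and B: "B \<in> carrier_mat ?m ?m" and C: "C \<in> carrier_mat ?m ?m"
    and D: "D \<in> carrier_mat ?m ?m" and Meq: "M = four_block_mat A B C D" using blk by auto
  have Mapp: "M *\<^sub>v (w @\<^sub>v u) = (A *\<^sub>v w + B *\<^sub>v u) @\<^sub>v (C *\<^sub>v w + D *\<^sub>v u)"
    if "w \<in> carrier_vec ?m" "u \<in> carrier_vec ?m" for w u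
    unfolding Meq by (rule four_block_mat_mult_vec[OF A B C D that])
  have M2: "M \<in> carrier_mat (?m + ?m) (?m + ?m)" using M by auto
  have Minj: "z = 0\<^sub>v (?m + ?m)" if "z \<in> carrier_vec (?m+?m)" "M *\<^sub>v z = 0\<^sub>v (?m+?m)" for z
    using det_0_iff_vec_prod_zero[OF M2] dM that by blast
  have inV: "w @\<^sub>v u \<in> V_R n R" if "w \<in> carrier_vec ?m" "u \<in> carrier_vec ?m"
      "euc_norm w > R * euc_norm u" for w u
    unfolding V_R_def using that append_carrier_vec[OF that(1,2)] by (auto simp: zfst_app zsnd_app mult_2)
  have notV: "euc_norm x \<le> R * euc_norm y" if "x \<in> carrier_vec ?m" "y \<in> carrier_vec ?m"
      "x @\<^sub>v y \<notin> V_R n R" for x y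
    using that append_carrier_vec[OF that(1,2)] unfolding V_R_def by (auto simp: zfst_app zsnd_app mult_2)
  have dC: "det C \<noteq> 0"
  proof
    assume "det C = 0"
    then obtain w where w: "w \<in> carrier_vec ?m" "w \<noteq> 0\<^sub>v ?m" "C *\<^sub>v w = 0\<^sub>v ?m"
      using det_0_iff_vec_prod_zero[OF C] by blast
    have wpos: "euc_norm w > 0"
      using euc_norm_le0[OF w(1)] w(2) by force
    have z: "w @\<^sub>v 0\<^sub>v ?m \<in> V_R n R" using inV[OF w(1), of "0\<^sub>v ?m"] wpos by (auto simp: euc_norm_0)
    have eq: "M *\<^sub>v (w @\<^sub>v 0\<^sub>v ?m) = (A *\<^sub>v w) @\<^sub>v 0\<^sub>v ?m"
      using Mapp[OF w(1), of "0\<^sub>v ?m"] w A B C D mat_vec_zero'[OF B] mat_vec_zero'[OF D] by auto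
    have Aw: "A *\<^sub>v w \<in> carrier_vec ?m" using A w by auto
    have "euc_norm (A *\<^sub>v w) \<le> R * euc_norm (0\<^sub>v ?m)"
      using notV[OF Aw, of "0\<^sub>v ?m"] hyp[OF z] eq by auto
    then have "A *\<^sub>v w = 0\<^sub>v ?m" using euc_norm_le0[OF Aw] by (auto simp: euc_norm_0)
    then have "M *\<^sub>v (w @\<^sub>v 0\<^sub>v ?m) = 0\<^sub>v (?m+?m)" using eq by auto
    then have "w @\<^sub>v 0\<^sub>v ?m = 0\<^sub>v (?m+?m)" using Minj append_carrier_vec[OF w(1) zero_carrier_vec[of ?m]] by blast
    then have "w = 0\<^sub>v ?m" using w(1)
      by (blast intro: app_zero)
    then show False using w(2) by simp
  qed
  have U: "C \<in> Units (ring_mat TYPE(complex) ?m ())" by (rule det_non_zero_imp_unit[OF C dC])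
  have "mat_inverse C \<noteq> None" using mat_inverse(1)[OF C, of "()"] U by blast
  then obtain Ci where Ci: "mat_inverse C = Some Ci" by auto
  have CiP: "C * Ci = 1\<^sub>m ?m" "Ci * C = 1\<^sub>m ?m" "Ci \<in> carrier_mat ?m ?m"
    using mat_inverse(2)[OF C Ci] by auto
  have mi: "mat_inv C = Ci" unfolding mat_inv_def using Ci by simp
  have ii: "op_norm (A * Ci) \<le> R"
  proof (rule op_norm_le[OF _ R])
    fix v :: "complex vec" assume "v \<in> carrier_vec (dim_col (A * Ci))"
    then have v: "v \<in> carrier_vec ?m" using CiP by auto
    let ?w = "Ci *\<^sub>v v"
    have w: "?w \<in> carrier_vec ?m" using CiP v by auto
    have Cw: "C *\<^sub>v ?w = v"
      using assoc_mult_mat_vec[OF C CiP(3) v] CiP(1) v by simp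
    have AC: "(A * Ci) *\<^sub>v v = A *\<^sub>v ?w" using assoc_mult_mat_vec[OF A CiP(3) v] by simp
    show "euc_norm (A * Ci *\<^sub>v v) \<le> R * euc_norm v"
    proof (cases "v = 0\<^sub>v ?m")
      case True
      then show ?thesis using A CiP mat_vec_zero'[OF CiP(3)] mat_vec_zero'[OF A] AC by (auto simp: euc_norm_0)
    next
      case False
      have "?w \<noteq> 0\<^sub>v ?m"
      proof
        assume "?w = 0\<^sub>v ?m"
        then have "v = C *\<^sub>v 0\<^sub>v ?m" using Cw by simp
        then show False using False mat_vec_zero'[OF C] by simp
      qed
      then have wpos: "euc_norm ?w > 0" using euc_norm_le0[OF w] by force
      have z: "?w @\<^sub>v 0\<^sub>v ?m \<in> V_R n R" using inV[OF w, of "0\<^sub>v ?m"] wpos by (auto simp: euc_norm_0)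
      have eq: "M *\<^sub>v (?w @\<^sub>v 0\<^sub>v ?m) = (A *\<^sub>v ?w) @\<^sub>v v"
        using Mapp[OF w, of "0\<^sub>v ?m"] w A B D Cw mat_vec_zero'[OF B] mat_vec_zero'[OF D] v by auto
      have Aw: "A *\<^sub>v ?w \<in> carrier_vec ?m" using A w by auto
      have "euc_norm (A *\<^sub>v ?w) \<le> R * euc_norm v"
        using notV[OF Aw v] hyp[OF z] eq by auto
      then show ?thesis using AC by simp
    qed
  qed
  have iii: "op_norm (Ci * D) \<le> R"
  proof (rule op_norm_le[OF _ R])
    fix v :: "complex vec" assume "v \<in> carrier_vec (dim_col (Ci * D))"
    then have v: "v \<in> carrier_vec ?m" using D by auto
    show "euc_norm (Ci * D *\<^sub>v v) \<le> R * euc_norm v"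
    proof (rule ccontr)
      assume ne: "\<not> ?thesis"
      let ?w = "- (Ci * D *\<^sub>v v)"
      have w: "?w \<in> carrier_vec ?m" using CiP D v by auto
      have wn: "euc_norm ?w > R * euc_norm v" using ne by (simp add: euc_norm_uminus)
      have z: "?w @\<^sub>v v \<in> V_R n R" using inV[OF w v wn] .
      have Cw: "C *\<^sub>v ?w = - (D *\<^sub>v v)"
      proof -
        have "C *\<^sub>v (Ci * D *\<^sub>v v) = D *\<^sub>v v"
          using assoc_mult_mat_vec[OF C mult_carrier_mat[OF CiP(3) D] v] assoc_mult_mat[OF C CiP(3) D] CiP(1) D v by simp
        then show ?thesis using C CiP D v mat_vec_uminus[of C ?m ?m "Ci * D *\<^sub>v v"] by auto
      qed
      have Aw: "A *\<^sub>v ?w + B *\<^sub>v v \<in> carrier_vec ?m" using A B w v by auto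
      have eq: "M *\<^sub>v (?w @\<^sub>v v) = (A *\<^sub>v ?w + B *\<^sub>v v) @\<^sub>v 0\<^sub>v ?m"
        using Mapp[OF w v] Cw D v by auto
      have "euc_norm (A *\<^sub>v ?w + B *\<^sub>v v) \<le> R * euc_norm (0\<^sub>v ?m)"
        using notV[OF Aw, of "0\<^sub>v ?m"] hyp[OF z] eq by auto
      then have "A *\<^sub>v ?w + B *\<^sub>v v = 0\<^sub>v ?m" using euc_norm_le0[OF Aw] by (auto simp: euc_norm_0)
      then have "M *\<^sub>v (?w @\<^sub>v v) = 0\<^sub>v (?m+?m)" using eq by auto
      then have "?w @\<^sub>v v = 0\<^sub>v (?m+?m)" using Minj append_carrier_vec[OF w v] by blast
      then have "?w = 0\<^sub>v ?m"
        using w v by (blast intro: app_zero)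
      then show False using wn euc_norm_nonneg[of v] R by (simp add: euc_norm_0) (meson mult_nonneg_nonneg less_le not_le)
    qed
  qed
  show ?thesis using dC ii iii mi by simp
qed

theorem lemma7p3:
  fixes n :: nat and \<Gamma> :: "complex mat set set" and R :: real
  assumes "type_L n \<Gamma>"
    and "R > 0"
    and "V_R n R \<subseteq> Omega n \<Gamma>"
    and "\<forall>g\<in>\<Gamma> - {pgl_one (2*n+2)}. pgl_image g (V_R n R) \<inter> V_R n R = {}"
  shows "\<exists>R0>0. \<forall>g\<in>\<Gamma> - {pgl_one (2*n+2)}. \<forall>M\<in>g. det M = 1 \<longrightarrow>
           (case split_block M (n+1) (n+1) of (A, B, C, D) \<Rightarrow>
              det C \<noteq> 0 \<and> op_norm (A * mat_inv C) \<le> R0 \<and> op_norm (mat_inv C * D) \<le> R0)"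
proof (rule exI[of _ R], intro conjI ballI impI)
  show "R > 0" using assms(2) .
  fix g M assume g: "g \<in> \<Gamma> - {pgl_one (2*n+2)}" and Mg: "M \<in> g" and dM: "det M = 1"
  have "\<Gamma> \<subseteq> PGL (2*n+2)" using assms(1) unfolding type_L_def is_subgroup_PGL_def by auto
  then obtain A0 where A0: "g = pgl_cls A0" "A0 \<in> carrier_mat (2*n+2) (2*n+2)"
    using g unfolding PGL_def by auto
  then have M: "M \<in> carrier_mat (2*n+2) (2*n+2)" using Mg unfolding pgl_cls_def by auto
  have hyp: "M *\<^sub>v z \<notin> V_R n R" if "z \<in> V_R n R" for z
  proof
    assume "M *\<^sub>v z \<in> V_R n R"
    moreover have "M *\<^sub>v z \<in> pgl_image g (V_R n R)" unfolding pgl_image_def using Mg that by blast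
    ultimately show False using assms(4) g by blast
  qed
  obtain A B C D where sb: "split_block M (n+1) (n+1) = (A, B, C, D)" by (metis prod_cases4)
  show "case split_block M (n+1) (n+1) of (A, B, C, D) \<Rightarrow>
              det C \<noteq> 0 \<and> op_norm (A * mat_inv C) \<le> R \<and> op_norm (mat_inv C * D) \<le> R"
    using key[OF M _ assms(2) hyp sb] dM sb by simp
qed

end
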